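(* Let $\gamma\in(1,3)$ and $\mu\in(0,1)$. At the point $B=(U_B,H_B)=(1,0)$ there exist two distinct branches of integral curves of $\frac{dH}{dU}=\frac{F(H,U)}{G(H,U)}$, with slopes $C_1(U_B,H_B)=0$ and $C_2(U_B,H_B)=\frac{\gamma(1-\mu)}{1+k_2}$. Moreover, there exists exactly one integral curve passing through $B$ along each of these branches, both integral curves are smooth at $B$, and the integral curve corresponding to the slope $0$ is precisely $H\equiv0$.
   Context: $k_1=\frac{(\gamma+1)+\mu(3-\gamma)}{2}$, $k_2=\frac{2(1-\mu)}{\gamma-1}$, $F(H,U)=2H[H-(U^2-k_1U+\mu)]$, $G(H,U)=H(U+k_2)-U(U-1)(U-\mu)$. Integral curves through $B$ are trajectories of $\frac{dH}{ds}=F$, $\frac{dU}{ds}=G$ converging to the equilibrium $B$ (where $F=G=0$ and $(U-1)^2-H=0$). *)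

theory Defs
  imports "HOL-Analysis.Analysis"
begin

definition k1 :: "real \<Rightarrow> real \<Rightarrow> real" where
  "k1 \<gamma> \<mu> = ((\<gamma> + 1) + \<mu> * (3 - \<gamma>)) / 2"

definition k2 :: "real \<Rightarrow> real \<Rightarrow> real" where
  "k2 \<gamma> \<mu> = 2 * (1 - \<mu>) / (\<gamma> - 1)"

definition F :: "real \<Rightarrow> real \<Rightarrow> real \<Rightarrow> real \<Rightarrow> real" where
  "F \<gamma> \<mu> H U = 2 * H * (H - (U^2 - k1 \<gamma> \<mu> * U + \<mu>))"

definition G :: "real \<Rightarrow> real \<Rightarrow> real \<Rightarrow> real \<Rightarrow> real" where
  "G \<gamma> \<mu> H U = H * (U + k2 \<gamma> \<mu>) - U * (U - 1) * (U - \<mu>)"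

definition integral_curve_B :: "real \<Rightarrow> real \<Rightarrow> (real \<Rightarrow> real) \<Rightarrow> real \<Rightarrow> real \<Rightarrow> bool" where
  "integral_curve_B \<gamma> \<mu> h a b \<longleftrightarrow>
     a < 1 \<and> 1 < b \<and> h 1 = 0 \<and>
     (\<forall>U \<in> {a<..<b} - {1}. G \<gamma> \<mu> (h U) U \<noteq> 0 \<and>
        (h has_real_derivative (F \<gamma> \<mu> (h U) U / G \<gamma> \<mu> (h U) U)) (at U))"

definition smooth_on_real :: "real set \<Rightarrow> (real \<Rightarrow> real) \<Rightarrow> bool" where
  "smooth_on_real S h \<longleftrightarrow> (\<forall>n. \<forall>x \<in> S. ((deriv ^^ n) h) differentiable (at x))"

end

theory Submission
  imports Defs
begin
function hc :: "real \<Rightarrow> real \<Rightarrow> nat \<Rightarrow> real" where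
 "hc g m n = (if n = 0 then 0 else if n = 1 then g*(1-m)/(1+k2 g m) else
   (-(1+k2 g m)*(real n+1)/2 * (\<Sum>k\<in>{2..n-1}. hc g m k * hc g m (n+1-k))
    - (real n/2 - 2) * (\<Sum>k\<in>{1..n-1}. hc g m k * hc g m (n-k))
    + ((2-m)*(real n-1) - 2*(2 - k1 g m)) * hc g m (n-1)
    + (real n - 4) * hc g m (n-2)) / (real n*((g-1)*(1-m)) + (1-m)))"
  by pat_completeness auto
termination by (relation "Wellfounded.measure (\<lambda>(g,m,n). n)") auto

declare hc.simps[simp del]

lemma inv_sq_sum_Icc: "N \<ge> 1 \<Longrightarrow> (\<Sum>k=1..N. 1/(real k)^2) \<le> 2 - 1/real N"
proof (induction N rule: dec_induct)
  case base then show ?case by simp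
next
  case (step n)
  have "1/(real (Suc n))^2 \<le> 1/(real n * real (Suc n))"
    using step(1) by (intro divide_left_mono) (auto simp: power2_eq_square)
  also have "\<dots> = 1/real n - 1/real (Suc n)" using step(1) by (simp add: field_simps)
  finally have "1/(real (Suc n))^2 \<le> 1/real n - 1/real (Suc n)" .
  then show ?case using step by (simp add: sum.cl_ivl_Suc)
qed

lemma inv_sq_sum_le: assumes "finite A" "0 \<notin> A" shows "(\<Sum>k\<in>A. 1/(real k)^2) \<le> 2"
proof (cases "A = {}")
  case True then show ?thesis by simp
next
  case False
  define N where "N = Max A"
  have sub: "A \<subseteq> {1..N}" using assms False unfolding N_def
    by (auto simp: Suc_le_eq)
  have N1: "N \<ge> 1" using sub False by auto
  have "(\<Sum>k\<in>A. 1/(real k)^2) \<le> (\<Sum>k=1..N. 1/(real k)^2)"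
    by (rule sum_mono2) (use sub in auto)
  also have "\<dots> \<le> 2 - 1/real N" by (rule inv_sq_sum_Icc[OF N1])
  also have "\<dots> \<le> 2" by simp
  finally show ?thesis .
qed

lemma pt_bound:
  assumes "1 \<le> k" "k < N"
  shows "1/((real k)^2 * (real (N-k))^2) \<le> 4/(real N)^2 * (1/(real k)^2 + 1/(real (N-k))^2)"
proof -
  define i where "i = real k"
  define j where "j = real (N-k)"
  have ij: "real N = i + j" "i \<ge> 1" "j \<ge> 1" using assms by (auto simp: i_def j_def)
  have "1/(i^2*j^2) \<le> 4/(real N)^2 * (1/i^2 + 1/j^2)"
  proof (cases "j \<le> i")
    case True
    have "(i+j)^2 \<le> (2*i)^2" using True ij by (intro power_mono) auto
    then have "(i+j)^2 \<le> 4*i^2" by (simp add: power_mult_distrib)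
    then have "1/(i^2*j^2) \<le> 4/(real N)^2 * (1/j^2)" using ij by (simp add: field_simps)
    also have "\<dots> \<le> 4/(real N)^2 * (1/i^2 + 1/j^2)" by (intro mult_left_mono) auto
    finally show ?thesis .
  next
    case False
    have "(i+j)^2 \<le> (2*j)^2" using False ij by (intro power_mono) auto
    then have "(i+j)^2 \<le> 4*j^2" by (simp add: power_mult_distrib)
    then have "1/(i^2*j^2) \<le> 4/(real N)^2 * (1/i^2)" using ij by (simp add: field_simps)
    also have "\<dots> \<le> 4/(real N)^2 * (1/i^2 + 1/j^2)" by (intro mult_left_mono) auto
    finally show ?thesis .
  qed
  then show ?thesis by (simp add: i_def j_def)
qed

lemma conv_sq:
  assumes "finite A" "\<And>k. k \<in> A \<Longrightarrow> 1 \<le> k \<and> k < N"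
  shows "(\<Sum>k\<in>A. 1/((real k)^2 * (real (N-k))^2)) \<le> 16/(real N)^2"
proof -
  have "(\<Sum>k\<in>A. 1/((real k)^2 * (real (N-k))^2)) \<le> (\<Sum>k\<in>A. 4/(real N)^2 * (1/(real k)^2 + 1/(real (N-k))^2))"
    by (rule sum_mono, rule pt_bound) (use assms in auto)
  also have "\<dots> = 4/(real N)^2 * ((\<Sum>k\<in>A. 1/(real k)^2) + (\<Sum>k\<in>A. 1/(real (N-k))^2))"
    by (simp only: distrib_left sum_distrib_left sum.distrib)
  also have "(\<Sum>k\<in>A. 1/(real (N-k))^2) = (\<Sum>j\<in>(\<lambda>k. N-k)`A. 1/(real j)^2)"
  proof -
    have "inj_on (\<lambda>k. N-k) A" using assms(2) unfolding inj_on_def by (metis diff_diff_cancel less_imp_le_nat)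
    then show ?thesis by (simp add: sum.reindex)
  qed
  also have "4/(real N)^2 * ((\<Sum>k\<in>A. 1/(real k)^2) + (\<Sum>j\<in>(\<lambda>k. N-k)`A. 1/(real j)^2)) \<le> 4/(real N)^2 * (2+2)"
    apply (intro mult_left_mono add_mono inv_sq_sum_le)
    using assms by force+
  finally show ?thesis by simp
qed

lemma step_bound:
  fixes h :: "nat \<Rightarrow> real" and a kk eps K R p1 bet :: real and n :: nat
  assumes n2: "2 \<le> n" and a: "0 < a" and kk: "0 < kk" and eps: "0 < eps" "8*kk*eps \<le> a/4"
    and K: "eps \<le> K" and R: "1 \<le> R" "64*K^2 \<le> a*eps*R" "16*(p1 + 2*\<bar>bet\<bar>)*K \<le> a*eps*R" "36*K \<le> a*eps*R"
    and p1: "0 \<le> p1" and h0: "h 0 = 0"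
    and IHe: "\<And>k. 2 \<le> k \<Longrightarrow> k < n \<Longrightarrow> \<bar>h k\<bar> \<le> eps * R^(k-1) / (real k)^2"
    and IHK: "\<And>k. 1 \<le> k \<Longrightarrow> k < n \<Longrightarrow> \<bar>h k\<bar> \<le> K * R^(k-1) / (real k)^2"
  shows "\<bar>- kk*(real n+1)/2 * (\<Sum>k\<in>{2..n-1}. h k * h (n+1-k))
          - (real n/2 - 2) * (\<Sum>k\<in>{1..n-1}. h k * h (n-k))
          + (p1*(real n-1) - 2*bet) * h (n-1) + (real n - 4) * h (n-2)\<bar> \<le> a*eps*R^(n-1)/real n"
proof -
  define X1 where "X1 = R^(n-1)"
  define X2 where "X2 = R^(n-2)"
  have X12: "X1 = R * X2"
  proof -
    have "n - 1 = Suc (n-2)" using n2 by simp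
    then show ?thesis by (simp add: X1_def X2_def)
  qed
  have X2pos: "X2 > 0" unfolding X2_def using R by simp
  have Kpos: "K > 0" using eps K by simp
  have npos: "real n > 0" using n2 by simp
  have s2: "\<bar>\<Sum>k\<in>{2..n-1}. h k * h (n+1-k)\<bar> \<le> eps^2 * X1 * (16/(real (n+1))^2)"
  proof -
    have "\<bar>\<Sum>k\<in>{2..n-1}. h k * h (n+1-k)\<bar> \<le> (\<Sum>k\<in>{2..n-1}. \<bar>h k\<bar> * \<bar>h (n+1-k)\<bar>)"
      by (rule order_trans[OF sum_abs]) (simp add: abs_mult)
    also have "\<dots> \<le> (\<Sum>k\<in>{2..n-1}. (eps * R^(k-1) / (real k)^2) * (eps * R^(n+1-k-1) / (real (n+1-k))^2))"
      using eps R by (intro sum_mono mult_mono IHe) auto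
    also have "\<dots> = (\<Sum>k\<in>{2..n-1}. eps^2 * X1 * (1/((real k)^2 * (real (n+1-k))^2)))"
    proof (rule sum.cong)
      fix k assume k: "k \<in> {2..n-1}"
      have "R^(k-1) * R^(n+1-k-1) = X1" unfolding X1_def power_add[symmetric]
        using k by (intro arg_cong[where f="\<lambda>i. R^i"]) auto
      then show "(eps * R^(k-1) / (real k)^2) * (eps * R^(n+1-k-1) / (real (n+1-k))^2) = eps^2 * X1 * (1/((real k)^2 * (real (n+1-k))^2))"
        by (simp add: power2_eq_square field_simps)
    qed simp
    also have "\<dots> = eps^2 * X1 * (\<Sum>k\<in>{2..n-1}. 1/((real k)^2 * (real (n+1-k))^2))"
      by (simp add: sum_distrib_left)
    also have "\<dots> \<le> eps^2 * X1 * (16/(real (n+1))^2)"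
      using R by (intro mult_left_mono conv_sq) (auto simp: X1_def)
    finally show ?thesis .
  qed
  have t1: "\<bar>- kk*(real n+1)/2 * (\<Sum>k\<in>{2..n-1}. h k * h (n+1-k))\<bar> \<le> a*eps*X1/(4*real n)"
  proof -
    have "\<bar>- kk*(real n+1)/2 * (\<Sum>k\<in>{2..n-1}. h k * h (n+1-k))\<bar> = kk*(real n+1)/2 * \<bar>\<Sum>k\<in>{2..n-1}. h k * h (n+1-k)\<bar>"
      using kk by (simp add: abs_mult)
    also have "\<dots> \<le> kk*(real n+1)/2 * (eps^2 * X1 * (16/(real (n+1))^2))"
      using kk by (intro mult_left_mono s2) auto
    also have "\<dots> = (8*kk*eps) * (eps * X1) / (real n + 1)"
    proof -
      have gen: "\<And>r. r > 0 \<Longrightarrow> kk*r/2*(eps^2*X1*(16/r^2)) = 8*kk*eps*(eps*X1)/r"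
        by (simp add: field_simps power2_eq_square)
      have e: "real n + 1 = real (n+1)" by simp
      show ?thesis unfolding e by (rule gen) simp
    qed
    also have "\<dots> \<le> (a/4) * (eps * X1) / (real n + 1)"
      using eps X2pos X12 R by (intro divide_right_mono mult_right_mono) auto
    also have "\<dots> \<le> (a/4) * (eps * X1) / real n"
      using a eps X2pos X12 R npos by (intro divide_left_mono) auto
    finally show ?thesis by simp
  qed
  have s1: "\<bar>\<Sum>k\<in>{1..n-1}. h k * h (n-k)\<bar> \<le> K^2 * X2 * (16/(real n)^2)"
  proof -
    have "\<bar>\<Sum>k\<in>{1..n-1}. h k * h (n-k)\<bar> \<le> (\<Sum>k\<in>{1..n-1}. \<bar>h k\<bar> * \<bar>h (n-k)\<bar>)"
      by (rule order_trans[OF sum_abs]) (simp add: abs_mult)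
    also have "\<dots> \<le> (\<Sum>k\<in>{1..n-1}. (K * R^(k-1) / (real k)^2) * (K * R^(n-k-1) / (real (n-k))^2))"
      using eps K R by (intro sum_mono mult_mono IHK) auto
    also have "\<dots> = (\<Sum>k\<in>{1..n-1}. K^2 * X2 * (1/((real k)^2 * (real (n-k))^2)))"
    proof (rule sum.cong)
      fix k assume k: "k \<in> {1..n-1}"
      have "R^(k-1) * R^(n-k-1) = X2" unfolding X2_def power_add[symmetric]
        using k by (intro arg_cong[where f="\<lambda>i. R^i"]) auto
      then show "(K * R^(k-1) / (real k)^2) * (K * R^(n-k-1) / (real (n-k))^2) = K^2 * X2 * (1/((real k)^2 * (real (n-k))^2))"
        by (simp add: power2_eq_square field_simps)
    qed simp
    also have "\<dots> = K^2 * X2 * (\<Sum>k\<in>{1..n-1}. 1/((real k)^2 * (real (n-k))^2))"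
      by (simp add: sum_distrib_left)
    also have "\<dots> \<le> K^2 * X2 * (16/(real n)^2)"
      using X2pos by (intro mult_left_mono conv_sq) auto
    finally show ?thesis .
  qed
  have t2: "\<bar>(real n/2 - 2) * (\<Sum>k\<in>{1..n-1}. h k * h (n-k))\<bar> \<le> a*eps*X1/(4*real n)"
  proof -
    have "\<bar>real n/2 - 2\<bar> \<le> real n" using n2 by auto
    then have "\<bar>(real n/2 - 2) * (\<Sum>k\<in>{1..n-1}. h k * h (n-k))\<bar> \<le> real n * (K^2 * X2 * (16/(real n)^2))"
      unfolding abs_mult by (intro mult_mono s1) auto
    also have "\<dots> = (64*K^2) * X2 / (4 * real n)"
      using npos by (simp add: field_simps power2_eq_square)
    also have "\<dots> \<le> (a*eps*R) * X2 / (4 * real n)"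
      using R X2pos npos by (intro divide_right_mono mult_right_mono) auto
    finally show ?thesis using X12 by (simp add: ac_simps)
  qed
  have t3: "\<bar>(p1*(real n-1) - 2*bet) * h (n-1)\<bar> \<le> a*eps*X1/(4*real n)"
  proof -
    have c1: "\<bar>p1*(real n-1) - 2*bet\<bar> \<le> (p1 + 2*\<bar>bet\<bar>) * real n"
    proof -
      have q: "0 \<le> p1*(real n-1)" using n2 p1 by simp
      have "\<bar>p1*(real n-1) - 2*bet\<bar> \<le> p1*(real n-1) + 2*\<bar>bet\<bar>" using q by linarith
      also have "\<dots> \<le> p1 * real n + (2*\<bar>bet\<bar>) * real n"
      proof (intro add_mono mult_left_mono)
        have "(2*\<bar>bet\<bar>) * 1 \<le> (2*\<bar>bet\<bar>) * real n" using n2 by (intro mult_left_mono) auto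
        then show "2*\<bar>bet\<bar> \<le> (2*\<bar>bet\<bar>) * real n" by simp
      qed (use p1 in auto)
      finally show ?thesis by (simp add: algebra_simps)
    qed
    have hb: "\<bar>h (n-1)\<bar> \<le> K * X2 / (real (n-1))^2"
      using IHK[of "n-1"] n2 by (simp add: X2_def numeral_2_eq_2)
    have "\<bar>(p1*(real n-1) - 2*bet) * h (n-1)\<bar> \<le> ((p1 + 2*\<bar>bet\<bar>) * real n) * (K * X2 / (real (n-1))^2)"
      unfolding abs_mult using p1 by (intro mult_mono c1 hb) auto
    also have "\<dots> = (p1 + 2*\<bar>bet\<bar>) * K * X2 * (real n / (real (n-1))^2)" by simp
    also have "\<dots> \<le> (p1 + 2*\<bar>bet\<bar>) * K * X2 * (4 / real n)"
    proof (intro mult_left_mono)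
      have "real n \<le> 2 * real (n-1)" using n2 by auto
      then have "real n * real n \<le> (2 * real (n-1)) * (2 * real (n-1))"
        by (intro mult_mono) auto
      then show "real n / (real (n-1))^2 \<le> 4 / real n"
        using n2 npos by (simp add: field_simps power2_eq_square)
    qed (use p1 Kpos X2pos in auto)
    also have "\<dots> = (16*(p1 + 2*\<bar>bet\<bar>)*K) * X2 / (4*real n)" using npos by (simp add: field_simps)
    also have "\<dots> \<le> (a*eps*R) * X2 / (4 * real n)"
      using R X2pos npos by (intro divide_right_mono mult_right_mono) auto
    finally show ?thesis using X12 by (simp add: ac_simps)
  qed
  have t4: "\<bar>(real n - 4) * h (n-2)\<bar> \<le> a*eps*X1/(4*real n)"
  proof (cases "n = 2")
    case True
    then show ?thesis using h0 a eps X2pos X12 R by simp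
  next
    case False
    then have n3: "n \<ge> 3" using n2 by simp
    have hb: "\<bar>h (n-2)\<bar> \<le> K * R^(n-3) / (real (n-2))^2"
      using IHK[of "n-2"] n3 by (simp add: numeral_3_eq_3 numeral_2_eq_2)
    have pw: "R^(n-3) \<le> X2" unfolding X2_def using R by (intro power_increasing) auto
    have hb2: "\<bar>h (n-2)\<bar> \<le> K * X2 / (real (n-2))^2"
    proof -
      have "K * R^(n-3) / (real (n-2))^2 \<le> K * X2 / (real (n-2))^2"
        using pw Kpos by (intro divide_right_mono mult_left_mono) auto
      then show ?thesis using hb by linarith
    qed
    have "\<bar>(real n - 4) * h (n-2)\<bar> \<le> real n * (K * X2 / (real (n-2))^2)"
      unfolding abs_mult by (intro mult_mono hb2) (use n3 in auto)
    also have "\<dots> = K * X2 * (real n / (real (n-2))^2)" by simp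
    also have "\<dots> \<le> K * X2 * (9 / real n)"
    proof (intro mult_left_mono)
      have "real n \<le> 3 * real (n-2)" using n3 by auto
      then have "real n * real n \<le> (3 * real (n-2)) * (3 * real (n-2))"
        by (intro mult_mono) auto
      then show "real n / (real (n-2))^2 \<le> 9 / real n"
        using n3 npos by (simp add: field_simps power2_eq_square)
    qed (use Kpos X2pos in auto)
    also have "\<dots> = (36*K) * X2 / (4*real n)" using npos by (simp add: field_simps)
    also have "\<dots> \<le> (a*eps*R) * X2 / (4 * real n)"
      using R X2pos npos by (intro divide_right_mono mult_right_mono) auto
    finally show ?thesis using X12 by (simp add: ac_simps)
  qed
  have "\<bar>- kk*(real n+1)/2 * (\<Sum>k\<in>{2..n-1}. h k * h (n+1-k))
          - (real n/2 - 2) * (\<Sum>k\<in>{1..n-1}. h k * h (n-k))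
          + (p1*(real n-1) - 2*bet) * h (n-1) + (real n - 4) * h (n-2)\<bar> \<le> 4 * (a*eps*X1/(4*real n))"
      proof -
    have tri: "\<And>A B C D::real. \<bar>A - B + C + D\<bar> \<le> \<bar>A\<bar> + \<bar>B\<bar> + \<bar>C\<bar> + \<bar>D\<bar>" by linarith
    have "a*eps*X1/(4*real n) + a*eps*X1/(4*real n) + a*eps*X1/(4*real n) + a*eps*X1/(4*real n) = 4 * (a*eps*X1/(4*real n))" by simp
    then show ?thesis using order_trans[OF tri add_mono[OF add_mono[OF add_mono[OF t1 t2] t3] t4]] by (simp add: ac_simps)
  qed
  then show ?thesis unfolding X1_def by simp
qed

lemma k2_pos: "1 < g \<Longrightarrow> m < 1 \<Longrightarrow> 0 < k2 g m"
  by (simp add: k2_def)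

lemma hc_0 [simp]: "hc g m 0 = 0" by (simp add: hc.simps)
lemma hc_1 [simp]: "hc g m 1 = g*(1-m)/(1+k2 g m)" by (simp add: hc.simps)
lemma hc_Suc0 [simp]: "hc g m (Suc 0) = g*(1-m)/(1+k2 g m)" by (simp add: hc.simps)

lemma hc_bound:
  fixes g m :: real
  assumes g: "1 < g" and m: "0 < m" "m < 1"
  shows "\<exists>K R. 0 < K \<and> 1 \<le> R \<and> (\<forall>n. \<bar>hc g m n\<bar> \<le> K * R^n)"
proof -
  define a where "a = (g-1)*(1-m)"
  define kk where "kk = 1 + k2 g m"
  define c where "c = g*(1-m)/kk"
  define eps where "eps = a/(32*kk)"
  define K where "K = c + eps"
  define p1 where "p1 = 2 - m"
  define bet where "bet = 2 - k1 g m"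
  define R where "R = max 1 (max (64*K^2/(a*eps)) (max (16*(p1+2*\<bar>bet\<bar>)*K/(a*eps)) (36*K/(a*eps))))"
  have a: "a > 0" using g m by (simp add: a_def)
  have kk: "kk > 0" using k2_pos[OF g m(2)] by (simp add: kk_def)
  have c: "c > 0" using g m kk by (simp add: c_def)
  have eps: "eps > 0" using a kk by (simp add: eps_def)
  have ae: "a*eps > 0" using a eps by simp
  have K: "eps \<le> K" "c \<le> K" using c eps by (auto simp: K_def)
  have R1: "1 \<le> R" by (simp add: R_def)
  have R2: "64*K^2 \<le> a*eps*R"
  proof -
    have "64*K^2/(a*eps) \<le> R" by (simp add: R_def)
    then show ?thesis using ae by (simp add: field_simps)
  qed
  have R3: "16*(p1+2*\<bar>bet\<bar>)*K \<le> a*eps*R"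
  proof -
    have "16*(p1+2*\<bar>bet\<bar>)*K/(a*eps) \<le> R" by (simp add: R_def)
    then show ?thesis using ae by (simp add: field_simps)
  qed
  have R4: "36*K \<le> a*eps*R"
  proof -
    have "36*K/(a*eps) \<le> R" by (simp add: R_def)
    then show ?thesis using ae by (simp add: field_simps)
  qed
  have e8: "8*kk*eps \<le> a/4" using kk by (simp add: eps_def)
  have p1: "0 \<le> p1" using m by (simp add: p1_def)
  have main: "2 \<le> n \<Longrightarrow> \<bar>hc g m n\<bar> \<le> eps * R^(n-1) / (real n)^2" for n
  proof (induction n rule: less_induct)
    case (less n)
    have IHe: "\<And>k. 2 \<le> k \<Longrightarrow> k < n \<Longrightarrow> \<bar>hc g m k\<bar> \<le> eps * R^(k-1) / (real k)^2"
      using less.IH by blast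
    have IHK: "\<bar>hc g m k\<bar> \<le> K * R^(k-1) / (real k)^2" if k: "1 \<le> k" "k < n" for k
    proof (cases "k = 1")
      case True
      then have "hc g m k = c" by (simp add: c_def kk_def)
      then show ?thesis using K c True by simp
    next
      case False
      then have "\<bar>hc g m k\<bar> \<le> eps * R^(k-1) / (real k)^2" using IHe k by simp
      also have "\<dots> \<le> K * R^(k-1) / (real k)^2"
        using K R1 by (intro divide_right_mono mult_right_mono) auto
      finally show ?thesis .
    qed
    define Num where "Num = - kk*(real n+1)/2 * (\<Sum>k\<in>{2..n-1}. hc g m k * hc g m (n+1-k))
          - (real n/2 - 2) * (\<Sum>k\<in>{1..n-1}. hc g m k * hc g m (n-k))
          + (p1*(real n-1) - 2*bet) * hc g m (n-1) + (real n - 4) * hc g m (n-2)"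
    have NB: "\<bar>Num\<bar> \<le> a*eps*R^(n-1)/real n" unfolding Num_def
      by (rule step_bound[OF less.prems a kk eps e8 K(1) R1 R2 R3 R4 p1 hc_0 IHe IHK]) auto
    have hn: "hc g m n = Num / (real n * a + (1-m))"
      using less.prems unfolding Num_def kk_def p1_def bet_def a_def by (subst hc.simps) simp
    have npos: "real n > 0" using less.prems by simp
    have Dn: "real n * a \<le> real n * a + (1-m)" using m by simp
    have Dpos: "real n * a > 0" using npos a by simp
    have "\<bar>hc g m n\<bar> = \<bar>Num\<bar> / (real n * a + (1-m))" using hn Dn Dpos by simp
    also have "\<dots> \<le> \<bar>Num\<bar> / (real n * a)" using Dn Dpos by (intro divide_left_mono) auto
    also have "\<dots> \<le> (a*eps*R^(n-1)/real n) / (real n * a)" using NB Dpos by (intro divide_right_mono) auto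
    also have "\<dots> = eps * R^(n-1) / (real n)^2" using a npos by (simp add: field_simps power2_eq_square)
    finally show ?case .
  qed
  have Kpos: "K > 0" using K c by simp
  have "\<bar>hc g m n\<bar> \<le> K * R^n" for n
  proof (cases "n \<ge> 2")
    case True
    have "\<bar>hc g m n\<bar> \<le> eps * R^(n-1) / (real n)^2" by (rule main[OF True])
    also have "\<dots> \<le> eps * R^(n-1) / 1"
    proof (intro divide_left_mono)
      have "(1::real) \<le> real n" using True by simp
      then have "1 * 1 \<le> real n * real n" by (intro mult_mono) auto
      then show "1 \<le> (real n)^2" by (simp add: power2_eq_square)
    qed (use eps R1 True in auto)
    also have "\<dots> \<le> K * R^(n-1)" using K R1 by (simp add: mult_right_mono)
    also have "\<dots> \<le> K * R^n" using Kpos R1 by (intro mult_left_mono power_increasing) auto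
    finally show ?thesis .
  next
    case False
    then have "n = 0 \<or> n = 1" by auto
    then show ?thesis
    proof
      assume "n = 1"
      then have "hc g m n = c" by (simp add: c_def kk_def)
      then have "\<bar>hc g m n\<bar> = c" using c by simp
      also have "c \<le> K * 1" using K by simp
      also have "K * 1 \<le> K * R^n" using Kpos R1 by (intro mult_left_mono) auto
      finally show ?thesis .
    qed (use Kpos R1 in simp)
  qed
  then show ?thesis using Kpos R1 by blast
qed

definition Hs :: "real \<Rightarrow> real \<Rightarrow> real fps" where "Hs g m = Abs_fps (hc g m)"

lemma Hs_nth [simp]: "fps_nth (Hs g m) n = hc g m n" by (simp add: Hs_def)

lemma HD_nth: "fps_nth (Hs g m * fps_deriv (Hs g m)) n = (real n + 1)/2 * fps_nth (Hs g m * Hs g m) (n+1)"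
proof -
  let ?H = "Hs g m" let ?D = "fps_deriv (Hs g m)"
  have c: "?D * ?H = ?H * ?D" by (rule mult.commute)
  have "fps_deriv (?H * ?H) = ?H * ?D + ?H * ?D" using c by simp
  then have "fps_nth (fps_deriv (?H * ?H)) n = fps_nth (?H * ?D) n + fps_nth (?H * ?D) n" by simp
  moreover have "fps_nth (fps_deriv (?H * ?H)) n = (real n + 1) * fps_nth (?H * ?H) (n+1)"
    by (simp only: fps_deriv_nth) simp
  ultimately have "(real n + 1) * fps_nth (?H * ?H) (n+1) = 2 * fps_nth (?H * ?D) n" by simp
  then show ?thesis by (simp add: field_simps)
qed

lemma A_split1: "n \<ge> 1 \<Longrightarrow> fps_nth (Hs g m * Hs g m) n = (\<Sum>k\<in>{1..n-1}. hc g m k * hc g m (n-k))"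
proof -
  assume n: "n \<ge> 1"
  then obtain j where j: "n = Suc j" by (cases n) auto
  have "fps_nth (Hs g m * Hs g m) n = (\<Sum>i=0..n. hc g m i * hc g m (n-i))" by (simp add: fps_mult_nth)
  also have "\<dots> = (\<Sum>i=1..n. hc g m i * hc g m (n-i))"
    by (simp add: sum.atLeast_Suc_atMost)
  also have "\<dots> = (\<Sum>i=1..j. hc g m i * hc g m (n-i))"
    unfolding j by (simp add: sum.cl_ivl_Suc)
  finally show ?thesis using j by simp
qed

lemma A_split2: "n \<ge> 2 \<Longrightarrow> fps_nth (Hs g m * Hs g m) (n+1) =
   2 * hc g m 1 * hc g m n + (\<Sum>k\<in>{2..n-1}. hc g m k * hc g m (n+1-k))"
proof -
  assume n: "n \<ge> 2"
  then obtain j where j: "n = Suc j" "j \<ge> 1" by (cases n) auto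
  have "fps_nth (Hs g m * Hs g m) (n+1) = (\<Sum>i=0..n+1. hc g m i * hc g m (n+1-i))" by (simp add: fps_mult_nth)
  also have "\<dots> = (\<Sum>i=1..n+1. hc g m i * hc g m (n+1-i))"
    by (simp add: sum.atLeast_Suc_atMost)
  also have "\<dots> = hc g m 1 * hc g m n + (\<Sum>i=2..n+1. hc g m i * hc g m (n+1-i))"
    using n by (subst sum.atLeast_Suc_atMost) (auto simp: numeral_2_eq_2)
  also have "(\<Sum>i=2..n+1. hc g m i * hc g m (n+1-i)) = (\<Sum>i=2..n. hc g m i * hc g m (n+1-i))"
    using n by (simp add: sum.cl_ivl_Suc)
  also have "\<dots> = (\<Sum>i=2..j. hc g m i * hc g m (n+1-i)) + hc g m n * hc g m 1"
    using j by (simp add: sum.cl_ivl_Suc)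
  finally show ?thesis using j by simp
qed

lemma alg:
  fixes kk c a p0 p1 bet N hn h1 h2 S1 S2 :: real
  assumes "kk*c = a + p0"
    and "hn*(N*a + p0) = -kk*(N+1)/2*S2 - (N/2-2)*S1 + (p1*(N-1) - 2*bet)*h1 + (N-4)*h2"
  shows "kk*((N+1)/2*(2*c*hn + S2)) + N/2*S1 - (p0*(N*hn) + p1*((N-1)*h1) + (N-2)*h2) - 2*S1 - (a*hn - 2*bet*h1 - 2*h2) = 0"
proof -
  have "kk*((N+1)/2*(2*c*hn + S2)) + N/2*S1 - (p0*(N*hn) + p1*((N-1)*h1) + (N-2)*h2) - 2*S1 - (a*hn - 2*bet*h1 - 2*h2)
     = (N+1)*hn*(kk*c - a - p0) + (hn*(N*a + p0) - (-kk*(N+1)/2*S2 - (N/2-2)*S1 + (p1*(N-1) - 2*bet)*h1 + (N-4)*h2))"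
    by (simp add: field_simps)
  then show ?thesis using assms by simp
qed

lemma E_zero:
  fixes g m :: real
  assumes g: "1 < g" and m: "0 < m" "m < 1"
  defines "H \<equiv> Hs g m"
  shows "fps_const (1 + k2 g m) * (H * fps_deriv H) + fps_X * (H * fps_deriv H)
    - (fps_const (1-m) * (fps_X * fps_deriv H) + fps_const (2-m) * (fps_X * (fps_X * fps_deriv H))
       + fps_X * (fps_X * (fps_X * fps_deriv H)))
    - fps_const 2 * (H * H)
    - (fps_const ((g-1)*(1-m)) * H - fps_const (2*(2 - k1 g m)) * (fps_X * H)
       - fps_const 2 * (fps_X * (fps_X * H))) = 0"
    (is "?E = 0")
proof (rule fps_ext)
  fix n
  define kk where "kk = 1 + k2 g m"
  define a where "a = (g-1)*(1-m)"
  define p0 where "p0 = 1 - m"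
  define p1 where "p1 = 2 - m"
  define bet where "bet = 2 - k1 g m"
  define c where "c = g*(1-m)/kk"
  define A where "A = (\<lambda>n. fps_nth (H * H) n)"
  define h where "h = hc g m"
  have kkpos: "kk > 0" using k2_pos[OF g m(2)] by (simp add: kk_def)
  have kc: "kk * c = a + p0" using kkpos by (simp add: c_def a_def p0_def field_simps)
  have h1: "h 1 = c" by (simp add: h_def c_def kk_def)
  have Hn: "fps_nth H k = h k" for k by (simp add: H_def h_def)
  have HD: "fps_nth (H * fps_deriv H) k = (real k + 1)/2 * A (k+1)" for k
    unfolding H_def A_def by (rule HD_nth)
  have e: "fps_nth ?E n = kk * fps_nth (H * fps_deriv H) n + fps_nth (fps_X * (H * fps_deriv H)) n
     - (p0 * fps_nth (fps_X * fps_deriv H) n + p1 * fps_nth (fps_X * (fps_X * fps_deriv H)) n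
        + fps_nth (fps_X * (fps_X * (fps_X * fps_deriv H))) n)
     - 2 * A n - (a * h n - 2*bet * fps_nth (fps_X * H) n - 2 * fps_nth (fps_X * (fps_X * H)) n)"
    by (simp add: kk_def p0_def p1_def a_def bet_def A_def Hn del: fps_X_mult_nth)
  show "fps_nth ?E n = fps_nth 0 n"
  proof (cases "n \<ge> 2")
    case True
    then obtain j where j: "n = Suc (Suc j)" by (cases n; cases "n - 1") auto
    have hn: "h n * (real n * a + p0) = -kk*(real n+1)/2*(\<Sum>k\<in>{2..n-1}. h k * h (n+1-k))
        - (real n/2-2)*(\<Sum>k\<in>{1..n-1}. h k * h (n-k)) + (p1*(real n-1) - 2*bet)*h (n-1) + (real n-4)*h (n-2)"
    proof -
      have "real n * a \<ge> 0" using g m by (simp add: a_def)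
      then have pos: "real n * a + p0 > 0" using m by (simp add: p0_def)
      have "h n = (-kk*(real n+1)/2*(\<Sum>k\<in>{2..n-1}. h k * h (n+1-k))
        - (real n/2-2)*(\<Sum>k\<in>{1..n-1}. h k * h (n-k)) + (p1*(real n-1) - 2*bet)*h (n-1) + (real n-4)*h (n-2))
         / (real n * a + p0)"
        unfolding h_def using True by (subst hc.simps) (simp add: kk_def p1_def bet_def a_def p0_def)
      then show ?thesis using pos by simp
    qed
    have A1: "A n = (\<Sum>k\<in>{1..n-1}. h k * h (n-k))" using A_split1[of n g m] True
      by (simp add: A_def H_def h_def)
    have A2: "A (n+1) = 2 * c * h n + (\<Sum>k\<in>{2..n-1}. h k * h (n+1-k))" using A_split2[of n g m] True h1
      unfolding h_def by (simp add: A_def H_def del: hc_1 hc_Suc0)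
    have t2: "fps_nth (fps_X * (H * fps_deriv H)) n = real n/2 * A n"
      using HD[of "n-1"] j by simp
    have t3: "fps_nth (fps_X * fps_deriv H) n = real n * h n" using j by (simp add: Hn)
    have t4: "fps_nth (fps_X * (fps_X * fps_deriv H)) n = (real n - 1) * h (n-1)" using j by (simp add: Hn)
    have t5: "fps_nth (fps_X * (fps_X * (fps_X * fps_deriv H))) n = (real n - 2) * h (n-2)"
      using j by (cases j) (simp_all add: Hn)
    have t6: "fps_nth (fps_X * H) n = h (n-1)" using j by (simp add: Hn)
    have t7: "fps_nth (fps_X * (fps_X * H)) n = h (n-2)" using j by (simp add: Hn)
    have "fps_nth ?E n = 0"
      unfolding e HD t2 t3 t4 t5 t6 t7 A2 A1
      by (rule alg[OF kc hn])
    then show ?thesis by simp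
  next
    case False
    then have "n = 0 \<or> n = 1" by auto
    then show ?thesis
    proof
      assume n: "n = 0"
      show ?thesis unfolding e n using HD[of 0] by (simp add: A_def Hn h_def)
    next
      assume n: "n = 1"
      have A2: "A 2 = c * c" using h1 by (simp add: A_def fps_mult_nth Hn numeral_2_eq_2 h_def)
      have "fps_nth ?E n = kk * (c*c) - p0 * c - a * c"
        unfolding e n using HD[of 1] HD[of 0] A2 h1 by (simp add: A_def Hn h_def kk_def p0_def a_def)
      also have "\<dots> = c * (kk * c - a - p0)" by (simp add: algebra_simps)
      finally show ?thesis using kc n by simp
    qed
  qed
qed

lemma radius_funpow_deriv:
  fixes H :: "real fps"
  shows "fps_conv_radius H \<le> fps_conv_radius ((fps_deriv ^^ n) H)"
proof (induction n)
  case (Suc n)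
  then show ?case using fps_conv_radius_deriv[of "(fps_deriv ^^ n) H"] by simp
qed simp

lemma eval_shift_deriv:
  fixes H :: "real fps"
  assumes "ereal \<bar>x - 1\<bar> < fps_conv_radius H"
  shows "((\<lambda>y. eval_fps H (y - 1)) has_real_derivative eval_fps (fps_deriv H) (x - 1)) (at x)"
proof -
  have "(eval_fps H has_field_derivative eval_fps (fps_deriv H) (x - 1)) (at (x - 1))"
    using assms by (intro has_field_derivative_eval_fps) simp
  moreover have "((\<lambda>y::real. y - 1) has_real_derivative 1) (at x)"
    by (auto intro!: derivative_eq_intros)
  ultimately have "((\<lambda>y. eval_fps H (y - 1)) has_real_derivative eval_fps (fps_deriv H) (x - 1) * 1) (at x)"
    by (rule DERIV_chain2[where f="eval_fps H" and g="\<lambda>y. y - 1"])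
  then show ?thesis by simp
qed

lemma smooth_eval:
  fixes H :: "real fps"
  assumes r: "ereal r \<le> fps_conv_radius H" and S: "S \<subseteq> ball 1 r"
  shows "smooth_on_real S (\<lambda>y. eval_fps H (y - 1))"
proof -
  let ?h = "\<lambda>y. eval_fps H (y - 1)"
  have rad: "ereal \<bar>x - 1\<bar> < fps_conv_radius ((fps_deriv ^^ n) H)" if "x \<in> ball 1 r" for x :: real and n
  proof -
    have "ereal \<bar>x - 1\<bar> < ereal r" using that by (simp add: dist_real_def abs_minus_commute)
    also have "\<dots> \<le> fps_conv_radius H" by (rule r)
    also have "\<dots> \<le> fps_conv_radius ((fps_deriv ^^ n) H)" by (rule radius_funpow_deriv)
    finally show ?thesis .
  qed
  have eq: "\<forall>x\<in>ball (1::real) r. (deriv ^^ n) ?h x = eval_fps ((fps_deriv ^^ n) H) (x - 1)" for n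
  proof (induction n)
    case 0 then show ?case by simp
  next
    case (Suc n)
    show ?case
    proof
      fix x :: real assume x: "x \<in> ball 1 r"
      have d: "((\<lambda>y. eval_fps ((fps_deriv ^^ n) H) (y - 1)) has_real_derivative
               eval_fps (fps_deriv ((fps_deriv ^^ n) H)) (x - 1)) (at x)"
        by (rule eval_shift_deriv[OF rad[OF x]])
      have "(((deriv ^^ n) ?h) has_real_derivative eval_fps (fps_deriv ((fps_deriv ^^ n) H)) (x - 1)) (at x)"
        by (rule has_field_derivative_transform_within_open[OF d, of "ball 1 r"]) (use x Suc in auto)
      then show "(deriv ^^ Suc n) ?h x = eval_fps ((fps_deriv ^^ Suc n) H) (x - 1)"
        by (simp add: DERIV_imp_deriv)
    qed
  qed
  show ?thesis unfolding smooth_on_real_def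
  proof (intro allI ballI)
    fix n x assume "x \<in> S"
    then have x: "x \<in> ball 1 r" using S by auto
    have d: "((\<lambda>y. eval_fps ((fps_deriv ^^ n) H) (y - 1)) has_real_derivative
               eval_fps (fps_deriv ((fps_deriv ^^ n) H)) (x - 1)) (at x)"
      by (rule eval_shift_deriv[OF rad[OF x]])
    have "(((deriv ^^ n) ?h) has_real_derivative eval_fps (fps_deriv ((fps_deriv ^^ n) H)) (x - 1)) (at x)"
      by (rule has_field_derivative_transform_within_open[OF d, of "ball 1 r"]) (use x eq in auto)
    then show "(deriv ^^ n) ?h differentiable at x"
      by (rule differentiableI[OF has_field_derivative_imp_has_derivative])
  qed
qed

lemma G_lim:
  assumes d: "(f has_real_derivative s) (at 1)" and f1: "f 1 = 0"
  shows "((\<lambda>U. G g m (f U) U / (U - 1)) \<longlongrightarrow> s * (1 + k2 g m) - (1 - m)) (at 1)"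
proof -
  have q: "((\<lambda>U. (f U - f 1) / (U - 1)) \<longlongrightarrow> s) (at 1)"
    using d by (simp add: has_field_derivative_iff)
  have "((\<lambda>U. ((f U - f 1) / (U - 1)) * (U + k2 g m) - U * (U - m)) \<longlongrightarrow> s * (1 + k2 g m) - 1 * (1 - m)) (at 1)"
    by (intro tendsto_intros q)
  moreover have "eventually (\<lambda>U. ((f U - f 1) / (U - 1)) * (U + k2 g m) - U * (U - m) = G g m (f U) U / (U - 1)) (at 1)"
    unfolding eventually_at
    by (rule exI[of _ 1]) (auto simp: G_def f1 field_simps)
  ultimately show ?thesis by (auto intro: Lim_transform_eventually)
qed

lemma FG_alg:
  fixes f h U k1 k2 m :: real
  shows "(2*f*(f - (U^2 - k1*U + m))) * (h*(U + k2) - U*(U-1)*(U-m))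
       - (2*h*(h - (U^2 - k1*U + m))) * (f*(U + k2) - U*(U-1)*(U-m))
       = (f - h) * (2*f*h*(U+k2) - U*(U-1)*(U-m)*(2*(f+h) - 2*(U^2 - k1*U + m)))"
  by (simp add: algebra_simps power2_eq_square)

lemma uniq:
  fixes g m s :: real and f h :: "real \<Rightarrow> real"
  assumes g: "1 < g" and m: "0 < m" "m < 1"
    and cf: "integral_curve_B g m f lo hi" and df: "(f has_real_derivative s) (at 1)"
    and ch: "integral_curve_B g m h lo' hi'" and dh: "(h has_real_derivative s) (at 1)"
    and e: "s * (1 + k2 g m) \<noteq> 1 - m"
  shows "\<exists>\<epsilon>>0. \<forall>U. \<bar>U - 1\<bar> < \<epsilon> \<longrightarrow> f U = h U"
proof -
  define kk where "kk = k2 g m"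
  define q where "q = (\<lambda>U::real. U^2 - k1 g m * U + m)"
  define e0 where "e0 = s * (1 + kk) - (1 - m)"
  have e0: "e0 \<noteq> 0" using e by (simp add: e0_def kk_def)
  have f1: "f 1 = 0" and h1: "h 1 = 0" using cf ch by (auto simp: integral_curve_B_def)
  have q1: "q 1 < 0"
  proof -
    have "q 1 = -((g-1)*(1-m))/2" by (simp add: q_def k1_def field_simps)
    moreover have "(g-1)*(1-m) > 0" using g m by simp
    ultimately show ?thesis by simp
  qed
  define Pf where "Pf = (\<lambda>U. (f U - f 1) / (U - 1))"
  define Ph where "Ph = (\<lambda>U. (h U - h 1) / (U - 1))"
  have Pf: "(Pf \<longlongrightarrow> s) (at 1)" using df by (simp add: has_field_derivative_iff Pf_def)
  have Ph: "(Ph \<longlongrightarrow> s) (at 1)" using dh by (simp add: has_field_derivative_iff Ph_def)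
  have fc: "(f \<longlongrightarrow> 0) (at 1)"
    using DERIV_isCont[OF df] f1 by (simp add: isCont_def)
  have hc: "(h \<longlongrightarrow> 0) (at 1)"
    using DERIV_isCont[OF dh] h1 by (simp add: isCont_def)
  define Z where "Z = (\<lambda>U. (2 * Pf U * h U * (U + kk) - U * (U - m) * (2 * (f U + h U) - 2 * q U))
     / ((Pf U * (U + kk) - U * (U - m)) * (Ph U * (U + kk) - U * (U - m))))"
  have "(Z \<longlongrightarrow> (2 * s * 0 * (1 + kk) - 1 * (1 - m) * (2 * (0 + 0) - 2 * q 1))
     / ((s * (1 + kk) - 1 * (1 - m)) * (s * (1 + kk) - 1 * (1 - m)))) (at 1)"
    unfolding Z_def q_def using e0
    by (intro tendsto_intros Pf Ph fc hc) (auto simp: e0_def)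
  moreover have "(2 * s * 0 * (1 + kk) - 1 * (1 - m) * (2 * (0 + 0) - 2 * q 1))
     / ((s * (1 + kk) - 1 * (1 - m)) * (s * (1 + kk) - 1 * (1 - m))) < 0"
  proof -
    have "e0 * e0 > 0" using e0 by (metis not_real_square_gt_zero)
    moreover have "(1 - m) * (2 * q 1) < 0" using m q1 by (simp add: mult_pos_neg)
    ultimately show ?thesis by (simp add: e0_def divide_neg_pos)
  qed
  ultimately have "eventually (\<lambda>U. Z U < 0) (at 1)" by (rule order_tendstoD)
  then obtain d where d: "d > 0" "\<And>U. U \<noteq> 1 \<Longrightarrow> dist U 1 < d \<Longrightarrow> Z U < 0"
    unfolding eventually_at by auto
  have ints: "lo < 1" "1 < hi" "lo' < 1" "1 < hi'" using cf ch by (auto simp: integral_curve_B_def)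
  define eps where "eps = min d (min (1-lo) (min (hi-1) (min (1-lo') (hi'-1))))"
  have eps: "eps > 0" using d ints by (simp add: eps_def)
  have pt: "G g m (f U) U \<noteq> 0 \<and> (f has_real_derivative F g m (f U) U / G g m (f U) U) (at U)
      \<and> G g m (h U) U \<noteq> 0 \<and> (h has_real_derivative F g m (h U) U / G g m (h U) U) (at U)
      \<and> Z U < 0"
    if U: "\<bar>U - 1\<bar> < eps" "U \<noteq> 1" for U
  proof -
    have "U \<in> {lo<..<hi} - {1}" "U \<in> {lo'<..<hi'} - {1}" using U by (auto simp: eps_def abs_less_iff)
    moreover have "Z U < 0" using d(2)[of U] U by (auto simp: eps_def dist_real_def)
    ultimately show ?thesis using cf ch unfolding integral_curve_B_def by blast
  qed
  have key: "F g m (f U) U / G g m (f U) U - F g m (h U) U / G g m (h U) U = (f U - h U) * (Z U / (U - 1))"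
    if U: "\<bar>U - 1\<bar> < eps" "U \<noteq> 1" for U
  proof -
    have u: "U - 1 \<noteq> 0" using U by simp
    define Df where "Df = Pf U * (U + kk) - U * (U - m)"
    define Dh where "Dh = Ph U * (U + kk) - U * (U - m)"
    define Nm where "Nm = 2 * Pf U * h U * (U + kk) - U * (U - m) * (2 * (f U + h U) - 2 * q U)"
    have Gf: "G g m (f U) U = (U - 1) * Df" using u by (simp add: G_def Df_def Pf_def f1 kk_def field_simps)
    have Gh: "G g m (h U) U = (U - 1) * Dh" using u by (simp add: G_def Dh_def Ph_def h1 kk_def field_simps)
    have N: "2*f U*h U*(U+kk) - U*(U-1)*(U-m)*(2*(f U+h U) - 2*q U) = (U - 1) * Nm"
      using u by (simp add: Nm_def Pf_def f1 field_simps)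
    have Gf0: "G g m (f U) U \<noteq> 0" and Gh0: "G g m (h U) U \<noteq> 0" using pt[OF U] by auto
    then have Df0: "Df \<noteq> 0" and Dh0: "Dh \<noteq> 0" using Gf Gh by auto
    have "F g m (f U) U / G g m (f U) U - F g m (h U) U / G g m (h U) U
        = (F g m (f U) U * G g m (h U) U - F g m (h U) U * G g m (f U) U) / (G g m (f U) U * G g m (h U) U)"
      using Gf0 Gh0 by (simp add: field_simps)
    also have "F g m (f U) U * G g m (h U) U - F g m (h U) U * G g m (f U) U
        = (f U - h U) * (2*f U*h U*(U+kk) - U*(U-1)*(U-m)*(2*(f U+h U) - 2*q U))"
      unfolding F_def G_def q_def kk_def by (rule FG_alg)
    also have "\<dots> = (f U - h U) * ((U - 1) * Nm)" by (simp only: N)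
    also have "G g m (f U) U * G g m (h U) U = (U - 1) * (U - 1) * (Df * Dh)" by (simp add: Gf Gh)
    also have "(f U - h U) * ((U - 1) * Nm) / ((U - 1) * (U - 1) * (Df * Dh)) = (f U - h U) * (Nm / (Df * Dh) / (U - 1))"
    proof -
      have gen: "\<And>x u N D::real. u \<noteq> 0 \<Longrightarrow> x * (u * N) / (u * u * D) = x * (N / D / u)"
        by (case_tac "D = 0") (simp_all add: field_simps)
      show ?thesis by (rule gen[OF u])
    qed
    also have "Nm / (Df * Dh) = Z U" by (simp add: Z_def Nm_def Df_def Dh_def)
    finally show ?thesis .
  qed
  define \<phi> where "\<phi> = (\<lambda>U. (f U - h U) * (f U - h U))"
  have \<phi>1: "\<phi> 1 = 0" by (simp add: \<phi>_def f1 h1)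
  have d\<phi>1: "(\<phi> has_real_derivative 0) (at 1)"
  proof -
    have dw: "((\<lambda>U. f U - h U) has_real_derivative s - s) (at 1)" by (rule DERIV_diff[OF df dh])
    have "(\<phi> has_real_derivative ((s - s) * (f 1 - h 1) + (s - s) * (f 1 - h 1))) (at 1)"
      unfolding \<phi>_def by (rule DERIV_mult[OF dw dw])
    then show ?thesis by simp
  qed
  have d\<phi>: "(\<phi> has_real_derivative 2 * ((f U - h U) * (f U - h U)) * Z U / (U - 1)) (at U)"
    if U: "\<bar>U - 1\<bar> < eps" "U \<noteq> 1" for U
  proof -
    let ?a = "F g m (f U) U / G g m (f U) U" and ?b = "F g m (h U) U / G g m (h U) U"
    have "(\<phi> has_real_derivative ((?a - ?b) * (f U - h U) + (?a - ?b) * (f U - h U))) (at U)"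
    proof -
      have dw: "((\<lambda>U. f U - h U) has_real_derivative ?a - ?b) (at U)"
        using pt[OF U] by (intro DERIV_diff) auto
      show ?thesis unfolding \<phi>_def by (rule DERIV_mult[OF dw dw])
    qed
    moreover have "(?a - ?b) * (f U - h U) + (?a - ?b) * (f U - h U) = 2 * ((f U - h U) * (f U - h U)) * Z U / (U - 1)"
      unfolding key[OF U] by (simp add: field_simps)
    ultimately show ?thesis by simp
  qed
  have zero: "\<phi> U \<le> 0" if U: "\<bar>U - 1\<bar> < eps" for U
  proof (cases "U \<ge> 1")
    case True
    have "\<phi> U \<le> \<phi> 1"
    proof (rule DERIV_nonpos_imp_nonincreasing[OF True])
      fix y assume y: "1 \<le> y" "y \<le> U"
      show "\<exists>l. (\<phi> has_real_derivative l) (at y) \<and> l \<le> 0"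
      proof (cases "y = 1")
        case True then show ?thesis using d\<phi>1 by auto
      next
        case False
        have yU: "\<bar>y - 1\<bar> < eps" using y U by auto
        have "2 * ((f y - h y) * (f y - h y)) * Z y \<le> 0"
          using pt[OF yU False] by (simp add: mult_nonneg_nonpos)
        moreover have "y - 1 > 0" using y False by simp
        ultimately have "2 * ((f y - h y) * (f y - h y)) * Z y / (y - 1) \<le> 0"
          by (simp add: divide_nonpos_pos)
        then show ?thesis using d\<phi>[OF yU False] by blast
      qed
    qed
    then show ?thesis using \<phi>1 by simp
  next
    case False
    then have U1: "U \<le> 1" by simp
    have "\<phi> U \<le> \<phi> 1"
    proof (rule DERIV_nonneg_imp_nondecreasing[OF U1])
      fix y assume y: "U \<le> y" "y \<le> 1"
      show "\<exists>l. (\<phi> has_real_derivative l) (at y) \<and> l \<ge> 0"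
      proof (cases "y = 1")
        case True then show ?thesis using d\<phi>1 by auto
      next
        case False
        have yU: "\<bar>y - 1\<bar> < eps" using y U by auto
        have "2 * ((f y - h y) * (f y - h y)) * Z y \<le> 0"
          using pt[OF yU False] by (simp add: mult_nonneg_nonpos)
        moreover have "y - 1 < 0" using y False by simp
        ultimately have "2 * ((f y - h y) * (f y - h y)) * Z y / (y - 1) \<ge> 0"
          by (simp add: divide_nonpos_neg)
        then show ?thesis using d\<phi>[OF yU False] by blast
      qed
    qed
    then show ?thesis using \<phi>1 by simp
  qed
  show ?thesis
  proof (intro exI[of _ eps] conjI allI impI eps)
    fix U assume "\<bar>U - 1\<bar> < eps"
    then have "(f U - h U) * (f U - h U) \<le> 0" using zero unfolding \<phi>_def by blast
    moreover have "0 \<le> (f U - h U) * (f U - h U)" by simp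
    ultimately have "(f U - h U) * (f U - h U) = 0" by linarith
    then show "f U = h U" by simp
  qed
qed

lemma okm: fixes f g :: "real fps"
  shows "ereal \<bar>z\<bar> < fps_conv_radius f \<Longrightarrow> ereal \<bar>z\<bar> < fps_conv_radius g \<Longrightarrow> ereal \<bar>z\<bar> < fps_conv_radius (f * g)"
  using fps_conv_radius_mult[of f g] by (meson less_le_trans min_less_iff_conj)
lemma oka: fixes f g :: "real fps"
  shows "ereal \<bar>z\<bar> < fps_conv_radius f \<Longrightarrow> ereal \<bar>z\<bar> < fps_conv_radius g \<Longrightarrow> ereal \<bar>z\<bar> < fps_conv_radius (f + g)"
  using fps_conv_radius_add[of f g] by (meson less_le_trans min_less_iff_conj)
lemma okd: fixes f g :: "real fps"
  shows "ereal \<bar>z\<bar> < fps_conv_radius f \<Longrightarrow> ereal \<bar>z\<bar> < fps_conv_radius g \<Longrightarrow> ereal \<bar>z\<bar> < fps_conv_radius (f - g)"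
  using fps_conv_radius_diff[of f g] by (meson less_le_trans min_less_iff_conj)

lemma ode_alg:
  fixes g m k2 U hv dv :: real
  shows "dv * (hv * (U + k2) - U * (U - 1) * (U - m)) - 2 * hv * (hv - (U^2 - ((g + 1) + m * (3 - g)) / 2 * U + m))
    = (1 + k2) * (hv * dv) + (U - 1) * (hv * dv)
    - ((1 - m) * ((U - 1) * dv) + (2 - m) * ((U - 1) * ((U - 1) * dv)) + (U - 1) * ((U - 1) * ((U - 1) * dv)))
    - 2 * (hv * hv)
    - ((g - 1) * (1 - m) * hv - 2 * (2 - ((g + 1) + m * (3 - g)) / 2) * ((U - 1) * hv)
       - 2 * ((U - 1) * ((U - 1) * hv)))"
  by (simp add: field_simps power2_eq_square)

lemma rlt: "\<bar>x::real\<bar> < r \<Longrightarrow> ereal r \<le> R \<Longrightarrow> ereal \<bar>x\<bar> < R"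
proof -
  assume a: "\<bar>x\<bar> < r" "ereal r \<le> R"
  have "ereal \<bar>x\<bar> < ereal r" using a(1) by simp
  then show ?thesis using a(2) by (rule less_le_trans)
qed

lemma exist_c2:
  fixes g m :: real
  assumes g: "1 < g" and m: "0 < m" "m < 1"
  shows "\<exists>h lo hi. integral_curve_B g m h lo hi \<and> (h has_real_derivative g*(1-m)/(1+k2 g m)) (at 1)
           \<and> smooth_on_real {lo<..<hi} h"
proof -
  define H where "H = Hs g m"
  define c where "c = g*(1-m)/(1+k2 g m)"
  have kkpos: "1 + k2 g m > 0" using k2_pos[OF g m(2)] by simp
  obtain K R where KR: "0 < K" "1 \<le> R" "\<And>n. \<bar>hc g m n\<bar> \<le> K * R^n"
    using hc_bound[OF g m] by blast
  define r where "r = 1 / (2 * R)"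
  have r: "r > 0" using KR by (simp add: r_def)
  have summ: "summable (\<lambda>n. hc g m n * r^n)"
  proof (rule summable_comparison_test')
    show "summable (\<lambda>n. K * (1/2)^n)" by (intro summable_mult summable_geometric) simp
    fix n :: nat
    have "norm (hc g m n * r^n) = \<bar>hc g m n\<bar> * r^n" using r by (simp add: abs_mult)
    also have "\<dots> \<le> (K * R^n) * r^n" using r by (intro mult_right_mono KR(3)) auto
    also have "\<dots> = K * (R * r)^n" by (simp add: power_mult_distrib)
    also have "R * r = 1/2" using KR by (simp add: r_def)
    finally show "norm (hc g m n * r^n) \<le> K * (1/2)^n" .
  qed
  have fnH: "fps_nth H = hc g m" by (rule ext) (simp add: H_def)
  have rad: "ereal r \<le> fps_conv_radius H"
    using conv_radius_geI[OF summ] r by (simp add: fps_conv_radius_def fnH)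
  have radD: "ereal r \<le> fps_conv_radius (fps_deriv H)"
    using rad fps_conv_radius_deriv[of H] by (rule order_trans)
  define hf where "hf = (\<lambda>U. eval_fps H (U - 1))"
  have hf1: "hf 1 = 0" by (simp add: hf_def eval_fps_at_0 H_def)
  have dhf: "(hf has_real_derivative eval_fps (fps_deriv H) (U - 1)) (at U)" if "\<bar>U - 1\<bar> < r" for U
    unfolding hf_def using that rad by (intro eval_shift_deriv rlt)
  have dhf1: "(hf has_real_derivative c) (at 1)"
    using dhf[of 1] r by (simp add: eval_fps_at_0 H_def c_def)
  have ode: "eval_fps (fps_deriv H) (U - 1) * G g m (hf U) U = F g m (hf U) U" if U: "\<bar>U - 1\<bar> < r" for U
  proof -
    define u where "u = U - 1"
    have oH: "ereal \<bar>u\<bar> < fps_conv_radius H" using U rad unfolding u_def by (rule rlt)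
    have oD: "ereal \<bar>u\<bar> < fps_conv_radius (fps_deriv H)" using U radD unfolding u_def by (rule rlt)
    have z: "eval_fps (fps_const (1 + k2 g m) * (H * fps_deriv H) + fps_X * (H * fps_deriv H)
    - (fps_const (1-m) * (fps_X * fps_deriv H) + fps_const (2-m) * (fps_X * (fps_X * fps_deriv H))
       + fps_X * (fps_X * (fps_X * fps_deriv H)))
    - fps_const 2 * (H * H)
    - (fps_const ((g-1)*(1-m)) * H - fps_const (2*(2 - k1 g m)) * (fps_X * H)
       - fps_const 2 * (fps_X * (fps_X * H)))) u = 0"
      unfolding H_def using E_zero[OF g m] by simp
    define hv where "hv = hf U"
    define dv where "dv = eval_fps (fps_deriv H) u"
    have ev: "eval_fps (fps_const (1 + k2 g m) * (H * fps_deriv H) + fps_X * (H * fps_deriv H)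
    - (fps_const (1-m) * (fps_X * fps_deriv H) + fps_const (2-m) * (fps_X * (fps_X * fps_deriv H))
       + fps_X * (fps_X * (fps_X * fps_deriv H)))
    - fps_const 2 * (H * H)
    - (fps_const ((g-1)*(1-m)) * H - fps_const (2*(2 - k1 g m)) * (fps_X * H)
       - fps_const 2 * (fps_X * (fps_X * H)))) u =
     (1 + k2 g m) * (hv * dv) + (U - 1) * (hv * dv)
    - ((1 - m) * ((U - 1) * dv) + (2 - m) * ((U - 1) * ((U - 1) * dv)) + (U - 1) * ((U - 1) * ((U - 1) * dv)))
    - 2 * (hv * hv)
    - ((g - 1) * (1 - m) * hv - 2 * (2 - ((g + 1) + m * (3 - g)) / 2) * ((U - 1) * hv)
       - 2 * ((U - 1) * ((U - 1) * hv)))"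
      using oH oD by (simp add: hf_def hv_def dv_def u_def eval_fps_add eval_fps_diff eval_fps_mult okm oka okd k1_def)
    have "dv * G g m hv U - F g m hv U = 0"
      unfolding F_def G_def k1_def ode_alg using z ev by simp
    then have "eval_fps (fps_deriv H) u * G g m (hf U) U - F g m (hf U) U = 0" by (simp add: hv_def dv_def)
    then show ?thesis by (simp add: u_def)
  qed
  have "((\<lambda>U. G g m (hf U) U / (U - 1)) \<longlongrightarrow> c * (1 + k2 g m) - (1 - m)) (at 1)"
    by (rule G_lim[OF dhf1 hf1])
  moreover have "c * (1 + k2 g m) - (1 - m) > 0"
    using kkpos g m by (simp add: c_def)
  ultimately have "eventually (\<lambda>U. G g m (hf U) U / (U - 1) > 0) (at 1)"
    by (rule order_tendstoD)
  then obtain d where d: "d > 0" "\<And>U. U \<noteq> 1 \<Longrightarrow> dist U 1 < d \<Longrightarrow> G g m (hf U) U / (U - 1) > 0"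
    unfolding eventually_at by auto
  define \<delta> where "\<delta> = min d r"
  have \<delta>: "\<delta> > 0" using d r by (simp add: \<delta>_def)
  have icB: "integral_curve_B g m hf (1 - \<delta>) (1 + \<delta>)"
    unfolding integral_curve_B_def
  proof (intro conjI ballI)
    show "1 - \<delta> < 1" "1 < 1 + \<delta>" using \<delta> by auto
    show "hf 1 = 0" by (rule hf1)
  next
    fix U assume U: "U \<in> {1 - \<delta><..<1 + \<delta>} - {1}"
    then have Ur: "\<bar>U - 1\<bar> < r" and Ud: "dist U 1 < d" and U1: "U \<noteq> 1"
      by (auto simp: \<delta>_def dist_real_def abs_less_iff)
    have "G g m (hf U) U / (U - 1) > 0" by (rule d(2)[OF U1 Ud])
    then show G0: "G g m (hf U) U \<noteq> 0" by auto
    have "eval_fps (fps_deriv H) (U - 1) = F g m (hf U) U / G g m (hf U) U"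
      using ode[OF Ur] G0 by (simp add: field_simps)
    then show "(hf has_real_derivative F g m (hf U) U / G g m (hf U) U) (at U)"
      using dhf[OF Ur] by simp
  qed
  have sm: "smooth_on_real {1 - \<delta><..<1 + \<delta>} hf"
    unfolding hf_def
  proof (rule smooth_eval[OF rad])
    show "{1 - \<delta><..<1 + \<delta>} \<subseteq> ball 1 r"
      by (auto simp: \<delta>_def dist_real_def abs_less_iff)
  qed
  show ?thesis using icB dhf1 sm unfolding c_def by blast
qed

lemma zero_curve:
  fixes g m :: real
  assumes m: "0 < m" "m < 1"
  shows "integral_curve_B g m (\<lambda>_. 0) ((1 + m)/2) 2"
  unfolding integral_curve_B_def
proof (intro conjI ballI)
  show "(1 + m)/2 < 1" "(1::real) < 2" using m by auto
  show "(0::real) = 0" by simp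
next
  fix U assume U: "U \<in> {(1 + m)/2<..<2} - {1}"
  then have "U > 0" "U \<noteq> 1" "U > m" using m by auto
  then show "G g m 0 U \<noteq> 0" by (simp add: G_def)
  show "((\<lambda>_. 0) has_real_derivative F g m 0 U / G g m 0 U) (at U)"
    by (simp add: F_def)
qed

lemma smooth_zero: "smooth_on_real S (\<lambda>_. 0)"
proof -
  have "(deriv ^^ n) (\<lambda>_::real. 0::real) = (\<lambda>_. 0)" for n
    by (induction n) auto
  then show ?thesis unfolding smooth_on_real_def by simp
qed

theorem lemma4p5:
  fixes \<gamma> \<mu> :: real
  assumes "1 < \<gamma>" and "\<gamma> < 3" and "0 < \<mu>" and "\<mu> < 1"
  shows "(0::real) \<noteq> \<gamma> * (1 - \<mu>) / (1 + k2 \<gamma> \<mu>)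
    \<and> (\<forall>c \<in> {0, \<gamma> * (1 - \<mu>) / (1 + k2 \<gamma> \<mu>)}.
         \<exists>h a b. integral_curve_B \<gamma> \<mu> h a b \<and> (h has_real_derivative c) (at 1)
           \<and> smooth_on_real {a<..<b} h
           \<and> (\<forall>g a' b'. integral_curve_B \<gamma> \<mu> g a' b' \<and> (g has_real_derivative c) (at 1)
                 \<longrightarrow> (\<exists>\<epsilon>>0. \<forall>U. \<bar>U - 1\<bar> < \<epsilon> \<longrightarrow> g U = h U)))
    \<and> (\<exists>a b. integral_curve_B \<gamma> \<mu> (\<lambda>_. 0) a b)
    \<and> (\<forall>g a b. integral_curve_B \<gamma> \<mu> g a b \<and> (g has_real_derivative 0) (at 1)
                 \<longrightarrow> (\<exists>\<epsilon>>0. \<forall>U. \<bar>U - 1\<bar> < \<epsilon> \<longrightarrow> g U = 0))"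
proof -
  note g = assms(1) and m = assms(3,4)
  define c2 where "c2 = \<gamma> * (1 - \<mu>) / (1 + k2 \<gamma> \<mu>)"
  have kkpos: "1 + k2 \<gamma> \<mu> > 0" using k2_pos[OF g m(2)] by simp
  have c2pos: "c2 > 0" using kkpos g m by (simp add: c2_def)
  have c2e: "c2 * (1 + k2 \<gamma> \<mu>) \<noteq> 1 - \<mu>" using kkpos g m by (simp add: c2_def)
  have z0: "integral_curve_B \<gamma> \<mu> (\<lambda>_. 0) ((1 + \<mu>)/2) 2" by (rule zero_curve[OF m])
  have d0: "((\<lambda>_. 0) has_real_derivative 0) (at 1)" by simp
  have uz: "\<exists>\<epsilon>>0. \<forall>U. \<bar>U - 1\<bar> < \<epsilon> \<longrightarrow> f U = 0"
    if "integral_curve_B \<gamma> \<mu> f a b" "(f has_real_derivative 0) (at 1)" for f a b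
    using uniq[OF g m that z0 d0] m by simp
  have part0: "\<exists>h a b. integral_curve_B \<gamma> \<mu> h a b \<and> (h has_real_derivative 0) (at 1)
           \<and> smooth_on_real {a<..<b} h
           \<and> (\<forall>g a' b'. integral_curve_B \<gamma> \<mu> g a' b' \<and> (g has_real_derivative 0) (at 1)
                 \<longrightarrow> (\<exists>\<epsilon>>0. \<forall>U. \<bar>U - 1\<bar> < \<epsilon> \<longrightarrow> g U = h U))"
    using z0 d0 smooth_zero uz by blast
  have part2: "\<exists>h a b. integral_curve_B \<gamma> \<mu> h a b \<and> (h has_real_derivative c2) (at 1)
           \<and> smooth_on_real {a<..<b} h
           \<and> (\<forall>g a' b'. integral_curve_B \<gamma> \<mu> g a' b' \<and> (g has_real_derivative c2) (at 1)
                 \<longrightarrow> (\<exists>\<epsilon>>0. \<forall>U. \<bar>U - 1\<bar> < \<epsilon> \<longrightarrow> g U = h U))"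
  proof -
    obtain h lo hi where h: "integral_curve_B \<gamma> \<mu> h lo hi" "(h has_real_derivative c2) (at 1)"
      "smooth_on_real {lo<..<hi} h"
      using exist_c2[OF g m] unfolding c2_def by blast
    have "\<exists>\<epsilon>>0. \<forall>U. \<bar>U - 1\<bar> < \<epsilon> \<longrightarrow> f U = h U"
      if "integral_curve_B \<gamma> \<mu> f a b" "(f has_real_derivative c2) (at 1)" for f a b
      by (rule uniq[OF g m that h(1) h(2) c2e])
    then show ?thesis using h by blast
  qed
  show ?thesis
    using c2pos part0 part2 z0 uz unfolding c2_def[symmetric] by auto
qed

end
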